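(* Let $W\in\{\mathrm{A}_{\frac12\infty},\mathrm{D}_{\frac12\infty}\}$ and $d\ge1$. The Coxeter element $Cox^{(d)}_W$, an endomorphism of $H_{W,\mathbb{C}}$, extends to an invertible bounded operator (with bounded inverse) on $\overline H_{W,\mathbb{C}}$.
   Context: Index sets: $C_{W,0}=\{c_0^{(n)}:n\ge1\}$ (type A) or $\{c_0^{(n)}:n\ge1\}\cup\{c_0^\pm\}$ (type D); $C_{W,1}=\{c_1^{(n)}:n\ge1\}$; $C_W=C_{W,0}\sqcup C_{W,1}$; $c_0^{(n)}$ is adjacent to $c_1^{(n)}$ and $c_1^{(n+1)}$, and in type D $c_0^\pm$ are adjacent to $c_1^{(1)}$; nothing else is adjacent. $H_{W,\mathbb{C}}=\bigoplus_{c\in C_W}\mathbb{C}\gamma_c$ with $H_{W,i,\mathbb{C}}=\bigoplus_{c\in C_{W,i}}\mathbb{C}\gamma_c$, Hermitian product making $\{\gamma_c\}$ orthonormal, and $\overline H_{W,\mathbb{C}}$ its $\ell^2$-completion. $J_W$ is the bilinear form with $J_W(\gamma_c,\gamma_{c'})=1$ if $c=c'$, $-1$ if $c\in C_{W,0}$, $c'\in C_{W,1}$ adjacent, $0$ otherwise. The Coxeter element (geometrically the product $\sigma_{W,0}\circ\sigma_{W,1}$ of the monodromies around $0$ and $1$ of the fibration defined by $f_W^{(d)}$) is defined by: for $u\in H_{W,0,\mathbb{C}}$, $Cox^{(d)}_W(u)=(-1)^{d-1}\big(u+\sum_{c\in C_{W,1}}J_W(u,\gamma_c)\gamma_c-\sum_{c\in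 C_{W,1}}\sum_{e\in C_{W,0}}J_W(u,\gamma_c)J_W(\gamma_e,\gamma_c)\gamma_e\big)$; for $u\in H_{W,1,\mathbb{C}}$, $Cox^{(d)}_W(u)=(-1)^{d-1}\big(u-\sum_{c\in C_{W,0}}J_W(\gamma_c,u)\gamma_c\big)$. *)

theory Defs
  imports "HOL-Analysis.Analysis"
begin

datatype wtype = TypeA | TypeD

text \<open>Vertices: V0 n = c_0^(n), V1 n = c_1^(n) (n >= 1), Pl = c_0^+, Mi = c_0^-.\<close>
datatype vert = V0 nat | V1 nat | Pl | Mi

definition C0 :: "wtype \<Rightarrow> vert set" where
  "C0 W = {V0 n | n. n \<ge> 1} \<union> (if W = TypeD then {Pl, Mi} else {})"

definition C1 :: "wtype \<Rightarrow> vert set" where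
  "C1 W = {V1 n | n. n \<ge> 1}"

definition CW :: "wtype \<Rightarrow> vert set" where
  "CW W = C0 W \<union> C1 W"

fun adj :: "vert \<Rightarrow> vert \<Rightarrow> bool" where
  "adj (V0 n) (V1 m) = (m = n \<or> m = n + 1)"
| "adj Pl (V1 m) = (m = 1)"
| "adj Mi (V1 m) = (m = 1)"
| "adj _ _ = False"

definition Jb :: "wtype \<Rightarrow> vert \<Rightarrow> vert \<Rightarrow> complex" where
  "Jb W c c' = (if c = c' then 1
     else if c \<in> C0 W \<and> c' \<in> C1 W \<and> adj c c' then -1 else 0)"

text \<open>Vectors are functions vert => complex vanishing outside C_W.
  H_{W,C}: finitely supported such vectors; H_{W,i,C} likewise on C_{W,i}.\<close>
definition supp :: "(vert \<Rightarrow> complex) \<Rightarrow> vert set" where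
  "supp u = {c. u c \<noteq> 0}"

definition HW :: "wtype \<Rightarrow> (vert \<Rightarrow> complex) set" where
  "HW W = {u. finite (supp u) \<and> supp u \<subseteq> CW W}"

definition gam :: "vert \<Rightarrow> vert \<Rightarrow> complex" where
  "gam c = (\<lambda>x. if x = c then 1 else 0)"

definition JW :: "wtype \<Rightarrow> (vert \<Rightarrow> complex) \<Rightarrow> (vert \<Rightarrow> complex) \<Rightarrow> complex" where
  "JW W u v = (\<Sum>c\<in>supp u. \<Sum>c'\<in>supp v. u c * v c' * Jb W c c')"

definition vsum :: "'i set \<Rightarrow> ('i \<Rightarrow> vert \<Rightarrow> complex) \<Rightarrow> vert \<Rightarrow> complex" where
  "vsum S f = (\<lambda>x. \<Sum>i\<in>S. f i x)"

text \<open>Coxeter element on H_{W,0} and H_{W,1}; the sums over C_{W,i} are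
  taken over the (finitely many) indices with nonzero coefficient.\<close>
definition Cox0 :: "wtype \<Rightarrow> nat \<Rightarrow> (vert \<Rightarrow> complex) \<Rightarrow> (vert \<Rightarrow> complex)" where
  "Cox0 W d u = (\<lambda>x. (-1) ^ (d - 1) *
     (u x
      + vsum {c \<in> C1 W. JW W u (gam c) \<noteq> 0} (\<lambda>c. \<lambda>y. JW W u (gam c) * gam c y) x
      - vsum {c \<in> C1 W. JW W u (gam c) \<noteq> 0}
          (\<lambda>c. vsum {e \<in> C0 W. JW W (gam e) (gam c) \<noteq> 0}
             (\<lambda>e. \<lambda>y. JW W u (gam c) * JW W (gam e) (gam c) * gam e y)) x))"

definition Cox1 :: "wtype \<Rightarrow> nat \<Rightarrow> (vert \<Rightarrow> complex) \<Rightarrow> (vert \<Rightarrow> complex)" where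
  "Cox1 W d u = (\<lambda>x. (-1) ^ (d - 1) *
     (u x - vsum {c \<in> C0 W. JW W (gam c) u \<noteq> 0} (\<lambda>c. \<lambda>y. JW W (gam c) u * gam c y) x))"

definition restr :: "vert set \<Rightarrow> (vert \<Rightarrow> complex) \<Rightarrow> (vert \<Rightarrow> complex)" where
  "restr S u = (\<lambda>x. if x \<in> S then u x else 0)"

text \<open>Cox^{(d)}_W on H_{W,C} = H_{W,0,C} \<oplus> H_{W,1,C}, extended linearly.\<close>
definition Cox :: "wtype \<Rightarrow> nat \<Rightarrow> (vert \<Rightarrow> complex) \<Rightarrow> (vert \<Rightarrow> complex)" where
  "Cox W d u = (\<lambda>x. Cox0 W d (restr (C0 W) u) x + Cox1 W d (restr (C1 W) u) x)"

text \<open>The l^2 completion of H_{W,C} and its norm.\<close>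
definition l2 :: "wtype \<Rightarrow> (vert \<Rightarrow> complex) set" where
  "l2 W = {f. supp f \<subseteq> CW W \<and> (\<lambda>c. (cmod (f c))\<^sup>2) summable_on CW W}"

definition l2norm :: "wtype \<Rightarrow> (vert \<Rightarrow> complex) \<Rightarrow> real" where
  "l2norm W f = sqrt (\<Sum>\<^sub>\<infinity>c\<in>CW W. (cmod (f c))\<^sup>2)"

definition bounded_linear_op :: "wtype \<Rightarrow> ((vert \<Rightarrow> complex) \<Rightarrow> (vert \<Rightarrow> complex)) \<Rightarrow> bool" where
  "bounded_linear_op W T \<longleftrightarrow>
     (\<forall>f\<in>l2 W. T f \<in> l2 W) \<and>
     (\<forall>f\<in>l2 W. \<forall>g\<in>l2 W. T (\<lambda>x. f x + g x) = (\<lambda>x. T f x + T g x)) \<and>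
     (\<forall>a. \<forall>f\<in>l2 W. T (\<lambda>x. a * f x) = (\<lambda>x. a * T f x)) \<and>
     (\<exists>K. \<forall>f\<in>l2 W. l2norm W (T f) \<le> K * l2norm W f)"

end

theory Submission
  imports Defs
begin


definition ss :: "wtype \<Rightarrow> (vert \<Rightarrow> complex) \<Rightarrow> real" where
  "ss W f = (\<Sum>\<^sub>\<infinity>c\<in>CW W. (cmod (f c))\<^sup>2)"

definition good :: "wtype \<Rightarrow> ((vert \<Rightarrow> complex) \<Rightarrow> (vert \<Rightarrow> complex)) \<Rightarrow> bool" where
  "good W T \<longleftrightarrow>
     (\<forall>f\<in>l2 W. T f \<in> l2 W) \<and>
     (\<forall>f\<in>l2 W. \<forall>g\<in>l2 W. T (\<lambda>x. f x + g x) = (\<lambda>x. T f x + T g x)) \<and>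
     (\<forall>a. \<forall>f\<in>l2 W. T (\<lambda>x. a * f x) = (\<lambda>x. a * T f x)) \<and>
     (\<exists>K\<ge>0. \<forall>f\<in>l2 W. ss W (T f) \<le> K * ss W f)"

lemma goodI:
  assumes "\<And>f. f\<in>l2 W \<Longrightarrow> T f \<in> l2 W"
    "\<And>f g. f\<in>l2 W \<Longrightarrow> g\<in>l2 W \<Longrightarrow> T (\<lambda>x. f x + g x) = (\<lambda>x. T f x + T g x)"
    "\<And>a f. f\<in>l2 W \<Longrightarrow> T (\<lambda>x. a * f x) = (\<lambda>x. a * T f x)"
    "K \<ge> 0" "\<And>f. f\<in>l2 W \<Longrightarrow> ss W (T f) \<le> K * ss W f"
  shows "good W T"
  unfolding good_def using assms by blast

lemma goodD:
  assumes "good W T"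
  shows "\<And>f. f\<in>l2 W \<Longrightarrow> T f \<in> l2 W"
    "\<And>f g. f\<in>l2 W \<Longrightarrow> g\<in>l2 W \<Longrightarrow> T (\<lambda>x. f x + g x) = (\<lambda>x. T f x + T g x)"
    "\<And>a f. f\<in>l2 W \<Longrightarrow> T (\<lambda>x. a * f x) = (\<lambda>x. a * T f x)"
  using assms unfolding good_def by blast+

lemma ss_nonneg: "ss W f \<ge> 0"
  unfolding ss_def by (rule infsum_nonneg) simp

lemma good_bounded: "good W T \<Longrightarrow> bounded_linear_op W T"
proof -
  assume g: "good W T"
  then obtain K where K: "K \<ge> 0" "\<forall>f\<in>l2 W. ss W (T f) \<le> K * ss W f" unfolding good_def by blast
  have "\<forall>f\<in>l2 W. l2norm W (T f) \<le> sqrt K * l2norm W f"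
  proof
    fix f assume "f \<in> l2 W"
    hence "sqrt (ss W (T f)) \<le> sqrt (K * ss W f)" using K by (simp add: real_sqrt_le_mono)
    thus "l2norm W (T f) \<le> sqrt K * l2norm W f" unfolding l2norm_def ss_def by (simp add: real_sqrt_mult)
  qed
  thus ?thesis using g unfolding good_def bounded_linear_op_def by blast
qed

lemma l2_iff: "f \<in> l2 W \<longleftrightarrow> supp f \<subseteq> CW W \<and> (\<lambda>c. (cmod (f c))\<^sup>2) summable_on UNIV"
proof -
  have "supp f \<subseteq> CW W \<Longrightarrow> ((\<lambda>c. (cmod (f c))\<^sup>2) summable_on CW W \<longleftrightarrow> (\<lambda>c. (cmod (f c))\<^sup>2) summable_on UNIV)"
    by (rule summable_on_cong_neutral) (auto simp: supp_def)
  thus ?thesis unfolding l2_def by blast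
qed

lemma ss_UNIV: "supp f \<subseteq> CW W \<Longrightarrow> ss W f = (\<Sum>\<^sub>\<infinity>c. (cmod (f c))\<^sup>2)"
  unfolding ss_def by (rule infsum_cong_neutral) (auto simp: supp_def)

lemma sq_add_le: "(cmod (a + b))\<^sup>2 \<le> 2 * (cmod a)\<^sup>2 + 2 * (cmod b)\<^sup>2"
proof -
  have "cmod (a+b) \<le> cmod a + cmod b" by (rule norm_triangle_ineq)
  hence "(cmod (a + b))\<^sup>2 \<le> (cmod a + cmod b)\<^sup>2" by (simp add: power_mono)
  also have "\<dots> \<le> 2 * (cmod a)\<^sup>2 + 2 * (cmod b)\<^sup>2" by (smt (verit) sum_squares_bound power2_sum)
  finally show ?thesis .
qed

lemma l2_add: assumes "f \<in> l2 W" "g \<in> l2 W"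
  shows "(\<lambda>x. f x + g x) \<in> l2 W" "ss W (\<lambda>x. f x + g x) \<le> 2 * ss W f + 2 * ss W g"
proof -
  have sf: "(\<lambda>c. (cmod (f c))\<^sup>2) summable_on UNIV" "supp f \<subseteq> CW W" using assms l2_iff by auto
  have sg: "(\<lambda>c. (cmod (g c))\<^sup>2) summable_on UNIV" "supp g \<subseteq> CW W" using assms l2_iff by auto
  have s2: "(\<lambda>c. 2 * (cmod (f c))\<^sup>2 + 2 * (cmod (g c))\<^sup>2) summable_on UNIV"
    by (intro summable_on_add summable_on_cmult_right sf sg)
  have ss: "(\<lambda>c. (cmod (f c + g c))\<^sup>2) summable_on UNIV"
    by (rule summable_on_comparison_test[OF s2]) (auto simp: sq_add_le)
  have sp: "supp (\<lambda>x. f x + g x) \<subseteq> CW W"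
  proof
    fix x assume "x \<in> supp (\<lambda>x. f x + g x)"
    hence "f x \<noteq> 0 \<or> g x \<noteq> 0" by (auto simp: supp_def)
    thus "x \<in> CW W" using sf(2) sg(2) by (auto simp: supp_def)
  qed
  show "(\<lambda>x. f x + g x) \<in> l2 W" using ss sp l2_iff by auto
  have "ss W (\<lambda>x. f x + g x) = (\<Sum>\<^sub>\<infinity>c. (cmod (f c + g c))\<^sup>2)" using sp by (simp add: ss_UNIV)
  also have "\<dots> \<le> (\<Sum>\<^sub>\<infinity>c. 2 * (cmod (f c))\<^sup>2 + 2 * (cmod (g c))\<^sup>2)"
    by (rule infsum_mono[OF ss s2]) (simp add: sq_add_le)
  also have "\<dots> = 2 * ss W f + 2 * ss W g"
    using sf sg by (simp add: infsum_add summable_on_cmult_right infsum_cmult_right ss_UNIV)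
  finally show "ss W (\<lambda>x. f x + g x) \<le> 2 * ss W f + 2 * ss W g" .
qed

lemma l2_scale: assumes "f \<in> l2 W"
  shows "(\<lambda>x. a * f x) \<in> l2 W" "ss W (\<lambda>x. a * f x) = (cmod a)\<^sup>2 * ss W f"
proof -
  have sf: "(\<lambda>c. (cmod (f c))\<^sup>2) summable_on UNIV" "supp f \<subseteq> CW W" using assms l2_iff by auto
  have e: "(\<lambda>c. (cmod (a * f c))\<^sup>2) = (\<lambda>c. (cmod a)\<^sup>2 * (cmod (f c))\<^sup>2)"
    by (simp add: norm_mult power_mult_distrib)
  have sp: "supp (\<lambda>x. a * f x) \<subseteq> CW W" using sf by (auto simp: supp_def)
  show "(\<lambda>x. a * f x) \<in> l2 W" using sp sf l2_iff e summable_on_cmult_right by metis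
  show "ss W (\<lambda>x. a * f x) = (cmod a)\<^sup>2 * ss W f"
    using sp sf by (simp add: ss_UNIV e infsum_cmult_right)
qed

lemma goodK: "good W T \<Longrightarrow> \<exists>K\<ge>0. \<forall>f\<in>l2 W. ss W (T f) \<le> K * ss W f"
  unfolding good_def by blast

lemma good_id: "good W (\<lambda>f. f)"
  by (rule goodI[where K=1]) auto

lemma good_comp: assumes t: "good W T" and s: "good W S" shows "good W (\<lambda>f. T (S f))"
proof -
  obtain K1 where K1: "K1 \<ge> 0" "\<forall>f\<in>l2 W. ss W (T f) \<le> K1 * ss W f" using goodK[OF t] by blast
  obtain K2 where K2: "K2 \<ge> 0" "\<forall>f\<in>l2 W. ss W (S f) \<le> K2 * ss W f" using goodK[OF s] by blast
  show ?thesis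
  proof (rule goodI[where K="K1*K2"])
    fix f assume f: "f \<in> l2 W"
    hence sf: "S f \<in> l2 W" by (rule goodD(1)[OF s])
    thus "T (S f) \<in> l2 W" by (rule goodD(1)[OF t])
    have "ss W (T (S f)) \<le> K1 * ss W (S f)" using K1 sf by blast
    also have "\<dots> \<le> K1 * (K2 * ss W f)" using K2 f K1(1) by (simp add: mult_left_mono)
    finally show "ss W (T (S f)) \<le> (K1*K2) * ss W f" by simp
  next
    fix f g assume f: "f \<in> l2 W" and g: "g \<in> l2 W"
    show "T (S (\<lambda>x. f x + g x)) = (\<lambda>x. T (S f) x + T (S g) x)"
      using goodD(1,2)[OF s] goodD(2)[OF t] f g by simp
  next
    fix a f assume f: "f \<in> l2 W"
    show "T (S (\<lambda>x. a * f x)) = (\<lambda>x. a * T (S f) x)"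
      using goodD(1,3)[OF s] goodD(3)[OF t] f by simp
  qed (use K1 K2 in simp)
qed

lemma good_add: assumes t: "good W T" and s: "good W S" shows "good W (\<lambda>f x. T f x + S f x)"
proof -
  obtain K1 where K1: "K1 \<ge> 0" "\<forall>f\<in>l2 W. ss W (T f) \<le> K1 * ss W f" using goodK[OF t] by blast
  obtain K2 where K2: "K2 \<ge> 0" "\<forall>f\<in>l2 W. ss W (S f) \<le> K2 * ss W f" using goodK[OF s] by blast
  show ?thesis
  proof (rule goodI[where K="2*K1+2*K2"])
    fix f assume f: "f \<in> l2 W"
    have a: "T f \<in> l2 W" "S f \<in> l2 W" using goodD(1)[OF t f] goodD(1)[OF s f] .
    show "(\<lambda>x. T f x + S f x) \<in> l2 W" using l2_add(1)[OF a] .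
    have "ss W (\<lambda>x. T f x + S f x) \<le> 2 * ss W (T f) + 2 * ss W (S f)" using l2_add(2)[OF a] .
    also have "\<dots> \<le> 2 * (K1 * ss W f) + 2 * (K2 * ss W f)" using K1 K2 f by (intro add_mono) auto
    finally show "ss W (\<lambda>x. T f x + S f x) \<le> (2*K1+2*K2) * ss W f" by (simp add: algebra_simps)
  next
    fix f g assume f: "f \<in> l2 W" and g: "g \<in> l2 W"
    show "(\<lambda>x. T (\<lambda>x. f x + g x) x + S (\<lambda>x. f x + g x) x) = (\<lambda>x. (T f x + S f x) + (T g x + S g x))"
      using goodD(2)[OF t f g] goodD(2)[OF s f g] by (simp add: algebra_simps)
  next
    fix a f assume f: "f \<in> l2 W"
    show "(\<lambda>x. T (\<lambda>x. a * f x) x + S (\<lambda>x. a * f x) x) = (\<lambda>x. a * (T f x + S f x))"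
      using goodD(3)[OF t f] goodD(3)[OF s f] by (simp add: algebra_simps)
  qed (use K1 K2 in simp)
qed

lemma good_scale: assumes t: "good W T" shows "good W (\<lambda>f x. a * T f x)"
proof -
  obtain K1 where K1: "K1 \<ge> 0" "\<forall>f\<in>l2 W. ss W (T f) \<le> K1 * ss W f" using goodK[OF t] by blast
  show ?thesis
  proof (rule goodI[where K="(cmod a)\<^sup>2 * K1"])
    fix f assume f: "f \<in> l2 W"
    have a: "T f \<in> l2 W" using goodD(1)[OF t f] .
    show "(\<lambda>x. a * T f x) \<in> l2 W" using l2_scale(1)[OF a] .
    have "ss W (\<lambda>x. a * T f x) = (cmod a)\<^sup>2 * ss W (T f)" using l2_scale(2)[OF a] .
    also have "\<dots> \<le> (cmod a)\<^sup>2 * (K1 * ss W f)" using K1 f by (intro mult_left_mono) auto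
    finally show "ss W (\<lambda>x. a * T f x) \<le> ((cmod a)\<^sup>2 * K1) * ss W f" by simp
  next
    fix f g assume f: "f \<in> l2 W" and g: "g \<in> l2 W"
    show "(\<lambda>x. a * T (\<lambda>x. f x + g x) x) = (\<lambda>x. a * T f x + a * T g x)"
      using goodD(2)[OF t f g] by (simp add: algebra_simps)
  next
    fix b f assume f: "f \<in> l2 W"
    show "(\<lambda>x. a * T (\<lambda>x. b * f x) x) = (\<lambda>x. b * (a * T f x))"
      using goodD(3)[OF t f] by (simp add: algebra_simps)
  qed (use K1 in simp)
qed

definition P :: "vert set \<Rightarrow> (vert \<Rightarrow> vert) \<Rightarrow> (vert \<Rightarrow> complex) \<Rightarrow> vert \<Rightarrow> complex" where
  "P D p f x = (if x \<in> D then f (p x) else 0)"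

lemma good_P: assumes D: "D \<subseteq> CW W" and inj: "inj_on p D" shows "good W (P D p)"
proof (rule goodI[where K=1])
  fix f assume f: "f \<in> l2 W"
  have sf: "(\<lambda>c. (cmod (f c))\<^sup>2) summable_on UNIV" "supp f \<subseteq> CW W" using f l2_iff by auto
  have a: "(\<lambda>c. (cmod (f c))\<^sup>2) summable_on (p ` D)" using sf(1) summable_on_subset_banach by blast
  hence b: "(\<lambda>c. (cmod (f (p c)))\<^sup>2) summable_on D"
    using summable_on_reindex[OF inj, of "\<lambda>c. (cmod (f c))\<^sup>2"] by (simp add: o_def)
  have sp: "supp (P D p f) \<subseteq> CW W" using D by (auto simp: supp_def P_def)
  have e: "(\<lambda>c. (cmod (P D p f c))\<^sup>2) summable_on UNIV \<longleftrightarrow> (\<lambda>c. (cmod (f (p c)))\<^sup>2) summable_on D"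
    by (rule summable_on_cong_neutral) (auto simp: P_def)
  show "P D p f \<in> l2 W" using sp e b l2_iff by blast
  have "ss W (P D p f) = (\<Sum>\<^sub>\<infinity>c\<in>D. (cmod (f (p c)))\<^sup>2)"
    unfolding ss_UNIV[OF sp] by (rule infsum_cong_neutral) (auto simp: P_def)
  also have "\<dots> = (\<Sum>\<^sub>\<infinity>c\<in>p ` D. (cmod (f c))\<^sup>2)"
    using infsum_reindex[OF inj, of "\<lambda>c. (cmod (f c))\<^sup>2"] by (simp add: o_def)
  also have "\<dots> \<le> (\<Sum>\<^sub>\<infinity>c. (cmod (f c))\<^sup>2)"
    by (rule infsum_mono_neutral[OF a sf(1)]) auto
  also have "\<dots> = ss W f" using ss_UNIV[OF sf(2)] by simp
  finally show "ss W (P D p f) \<le> 1 * ss W f" by simp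
qed (auto simp: P_def fun_eq_iff)




fun un0 :: "vert \<Rightarrow> nat" where "un0 (V0 n) = n" | "un0 _ = 0"
fun un1 :: "vert \<Rightarrow> nat" where "un1 (V1 n) = n" | "un1 _ = 0"

definition DD :: "wtype \<Rightarrow> vert set" where "DD W = (if W = TypeD then {V1 1} else {})"

definition A :: "wtype \<Rightarrow> (vert \<Rightarrow> complex) \<Rightarrow> vert \<Rightarrow> complex" where
  "A W f = (\<lambda>x. P (C1 W) (\<lambda>y. V0 (un1 y)) f x + P {V1 m |m. m \<ge> 2} (\<lambda>y. V0 (un1 y - 1)) f x
     + P (DD W) (\<lambda>_. Pl) f x + P (DD W) (\<lambda>_. Mi) f x)"

definition At :: "wtype \<Rightarrow> (vert \<Rightarrow> complex) \<Rightarrow> vert \<Rightarrow> complex" where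
  "At W f = (\<lambda>x. P {V0 n |n. n \<ge> 1} (\<lambda>y. V1 (un0 y)) f x + P {V0 n |n. n \<ge> 1} (\<lambda>y. V1 (un0 y + 1)) f x
     + P (C0 W \<inter> {Pl}) (\<lambda>_. V1 1) f x + P (C0 W \<inter> {Mi}) (\<lambda>_. V1 1) f x)"

lemma good_A: "good W (A W)"
proof -
  have 1: "good W (P (C1 W) (\<lambda>y. V0 (un1 y)))"
    by (rule good_P) (auto simp: CW_def C1_def inj_on_def)
  have 2: "good W (P {V1 m |m. m \<ge> 2} (\<lambda>y. V0 (un1 y - 1)))"
    by (rule good_P) (auto simp: CW_def C1_def inj_on_def)
  have 3: "good W (P (DD W) (\<lambda>_. Pl))" "good W (P (DD W) (\<lambda>_. Mi))"
    by (rule good_P; auto simp: CW_def C1_def DD_def)+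
  show ?thesis unfolding A_def by (intro good_add 1 2 3)
qed

lemma good_At: "good W (At W)"
proof -
  have 1: "good W (P {V0 n |n. n \<ge> 1} (\<lambda>y. V1 (un0 y)))"
    by (rule good_P) (auto simp: CW_def C0_def inj_on_def)
  have 2: "good W (P {V0 n |n. n \<ge> 1} (\<lambda>y. V1 (un0 y + 1)))"
    by (rule good_P) (auto simp: CW_def C0_def inj_on_def)
  have 3: "good W (P (C0 W \<inter> {Pl}) (\<lambda>_. V1 1))" "good W (P (C0 W \<inter> {Mi}) (\<lambda>_. V1 1))"
    by (rule good_P; auto simp: CW_def inj_on_def)+
  show ?thesis unfolding At_def by (intro good_add 1 2 3)
qed

definition E2 where "E2 W f = (\<lambda>x. f x + (-1) * A W f x)"
definition E1 where "E1 W f = (\<lambda>x. f x + At W f x)"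
definition E2' where "E2' W f = (\<lambda>x. f x + A W f x)"
definition E1' where "E1' W f = (\<lambda>x. f x + (-1) * At W f x)"

definition TT :: "wtype \<Rightarrow> nat \<Rightarrow> (vert \<Rightarrow> complex) \<Rightarrow> vert \<Rightarrow> complex" where
  "TT W d f = (\<lambda>x. (-1) ^ (d - 1) * E1 W (E2 W f) x)"
definition SS :: "wtype \<Rightarrow> nat \<Rightarrow> (vert \<Rightarrow> complex) \<Rightarrow> vert \<Rightarrow> complex" where
  "SS W d f = (\<lambda>x. (-1) ^ (d - 1) * E2' W (E1' W f) x)"

lemma good_TT: "good W (TT W d)"
proof -
  have a: "good W (E2 W)" unfolding E2_def by (intro good_add good_id good_scale good_A)
  have b: "good W (E1 W)" unfolding E1_def by (intro good_add good_id good_At)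
  have "good W (\<lambda>f. E1 W (E2 W f))" using good_comp[OF b a] .
  thus ?thesis unfolding TT_def by (rule good_scale)
qed

lemma good_SS: "good W (SS W d)"
proof -
  have a: "good W (E2' W)" unfolding E2'_def by (intro good_add good_id good_A)
  have b: "good W (E1' W)" unfolding E1'_def by (intro good_add good_id good_scale good_At)
  have "good W (\<lambda>f. E2' W (E1' W f))" using good_comp[OF a b] .
  thus ?thesis unfolding SS_def by (rule good_scale)
qed

lemma AA: "A W (A W g) x = 0"
  by (cases x) (auto simp: A_def P_def C1_def DD_def)
lemma AtAt: "At W (At W g) x = 0"
  by (cases x) (auto simp: At_def P_def C0_def)

lemma P_add: "P D p (\<lambda>x. f x + g x) y = P D p f y + P D p g y"
  by (simp add: P_def)
lemma P_sc: "P D p (\<lambda>x. c * g x) y = c * P D p g y"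
  by (simp add: P_def)

lemma A_add: "A W (\<lambda>x. f x + g x) y = A W f y + A W g y"
  by (simp add: A_def P_add)
lemma At_add: "At W (\<lambda>x. f x + g x) y = At W f y + At W g y"
  by (simp add: At_def P_add)
lemma A_sc: "A W (\<lambda>x. c * g x) y = c * A W g y"
  by (simp add: A_def P_sc algebra_simps)
lemma At_sc: "At W (\<lambda>x. c * g x) y = c * At W g y"
  by (simp add: At_def P_sc algebra_simps)

lemma eps2: "((-1::complex) ^ (d - 1)) * ((-1) ^ (d - 1)) = 1"
  by (simp add: power_mult_distrib[symmetric])

lemma ST: "SS W d (TT W d f) = f"
proof -
  define e where "e = (-1::complex)^(d-1)"
  define h where "h = E2 W f"
  have T: "TT W d f = (\<lambda>x. e * (h x + At W h x))" by (simp add: TT_def E1_def h_def e_def)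
  have 1: "E1' W (TT W d f) = (\<lambda>x. e * h x)"
  proof
    fix x
    have "At W (TT W d f) x = e * (At W h x)"
      unfolding T At_sc At_add AtAt by simp
    thus "E1' W (TT W d f) x = e * h x" unfolding E1'_def T by (simp add: algebra_simps)
  qed
  have 2: "h x + A W h x = f x" for x
    unfolding h_def E2_def A_add A_sc AA by simp
  show ?thesis unfolding SS_def 1 E2'_def A_sc
    by (rule ext) (simp add: 2 flip: distrib_left, simp add: e_def flip: mult.assoc add: eps2)
qed

lemma TS: "TT W d (SS W d f) = f"
proof -
  define e where "e = (-1::complex)^(d-1)"
  define h where "h = E1' W f"
  have T: "SS W d f = (\<lambda>x. e * (h x + A W h x))" by (simp add: SS_def E2'_def h_def e_def)
  have 1: "E2 W (SS W d f) = (\<lambda>x. e * h x)"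
  proof
    fix x
    have "A W (SS W d f) x = e * (A W h x)"
      unfolding T A_sc A_add AA by simp
    thus "E2 W (SS W d f) x = e * h x" unfolding E2_def T by (simp add: algebra_simps)
  qed
  have 2: "h x + At W h x = f x" for x
    unfolding h_def E1'_def At_add At_sc AtAt by simp
  show ?thesis unfolding TT_def 1 E1_def At_sc
    by (rule ext) (simp add: 2 flip: distrib_left, simp add: e_def flip: mult.assoc add: eps2)
qed




lemma supp_gam: "supp (gam c) = {c}"
  by (auto simp: supp_def gam_def)

lemma JW_gam_r: "JW W u (gam c) = (\<Sum>c0\<in>supp u. u c0 * Jb W c0 c)"
  unfolding JW_def supp_gam by (simp add: gam_def)

lemma JW_gam_l: "JW W (gam c) v = (\<Sum>c'\<in>supp v. v c' * Jb W c c')"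
  unfolding JW_def supp_gam by (simp add: gam_def)

lemma sum_eq_L:
  assumes "finite S" "finite T" "\<And>x. x \<in> S - T \<Longrightarrow> h x = 0" "\<And>x. x \<in> T - S \<Longrightarrow> h x = 0"
  shows "sum h S = sum h T"
proof -
  have "sum h (S \<union> T) = sum h S" by (rule sum.mono_neutral_right) (use assms in auto)
  moreover have "sum h (S \<union> T) = sum h T" by (rule sum.mono_neutral_right) (use assms in auto)
  ultimately show ?thesis by simp
qed

lemma C01: "c \<in> C0 W \<Longrightarrow> c \<notin> C1 W"
  by (auto simp: C0_def C1_def split: if_splits)

definition nb0 where "nb0 W c = {e \<in> C0 W. adj e c}"
definition nb1 where "nb1 W x = {c \<in> C1 W. adj x c}"

lemma nb0_mem: "e \<in> nb0 W (V1 m) \<longleftrightarrow> (e = V0 m \<and> m \<ge> 1) \<or> (e = V0 (m-1) \<and> m \<ge> 2) \<or> ((e = Pl \<or> e = Mi) \<and> m = 1 \<and> W = TypeD)"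
  by (cases e) (auto simp: nb0_def C0_def)

lemma nb1_mem0: "c \<in> nb1 W (V0 n) \<longleftrightarrow> (c = V1 n \<and> n \<ge> 1) \<or> c = V1 (n+1)"
  by (cases c) (auto simp: nb1_def C1_def)
lemma nb1_memP: "c \<in> nb1 W Pl \<longleftrightarrow> c = V1 1"
  by (cases c) (auto simp: nb1_def C1_def)
lemma nb1_memM: "c \<in> nb1 W Mi \<longleftrightarrow> c = V1 1"
  by (cases c) (auto simp: nb1_def C1_def)

lemma nb0_sub: "nb0 W c \<subseteq> {V0 (un1 c), V0 (un1 c - 1), Pl, Mi}"
proof
  fix e assume "e \<in> nb0 W c"
  hence "adj e c" by (simp add: nb0_def)
  thus "e \<in> {V0 (un1 c), V0 (un1 c - 1), Pl, Mi}" by (cases e; cases c) auto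
qed

lemma nb1_sub: "nb1 W x \<subseteq> {V1 (un0 x), V1 (un0 x + 1), V1 1}"
proof
  fix e assume "e \<in> nb1 W x"
  hence "adj x e" by (simp add: nb1_def)
  thus "e \<in> {V1 (un0 x), V1 (un0 x + 1), V1 1}" by (cases x; cases e) auto
qed

lemma fin_nb0: "finite (nb0 W c)" using nb0_sub finite_subset by blast
lemma fin_nb1: "finite (nb1 W c)" using nb1_sub finite_subset by blast

lemma sumA: assumes "c \<in> C1 W" shows "(\<Sum>e\<in>nb0 W c. f e) = A W f c"
proof -
  obtain m where m: "c = V1 m" "m \<ge> 1" using assms by (auto simp: C1_def)
  show ?thesis
  proof (cases "m = 1")
    case True
    show ?thesis
    proof (cases W)
      case TypeA
      have "nb0 W c = {V0 1}"
        by (rule set_eqI) (simp add: nb0_mem m True TypeA)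
      moreover have "A W f c = f (V0 1)" using m True TypeA by (simp add: A_def P_def DD_def C1_def)
      ultimately show ?thesis by simp
    next
      case TypeD
      have "nb0 W c = {V0 1, Pl, Mi}"
        by (rule set_eqI) (auto simp: nb0_mem m True TypeD)
      moreover have "A W f c = f (V0 1) + f Pl + f Mi" using m True TypeD by (simp add: A_def P_def DD_def C1_def)
      ultimately show ?thesis by simp
    qed
  next
    case False
    have "nb0 W c = {V0 m, V0 (m - 1)}"
      by (rule set_eqI) (use m False in \<open>auto simp: nb0_mem\<close>)
    moreover have "V0 m \<noteq> V0 (m - 1)" using m by simp
    moreover have "A W f c = f (V0 m) + f (V0 (m - 1))" using m False by (simp add: A_def P_def DD_def C1_def)
    ultimately show ?thesis by simp
  qed
qed

lemma sumAt: assumes "x \<in> C0 W" shows "(\<Sum>c\<in>nb1 W x. f c) = At W f x"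
proof -
  consider n where "x = V0 n" "n \<ge> 1" | "x = Pl" "W = TypeD" | "x = Mi" "W = TypeD"
    using assms by (auto simp: C0_def split: if_splits)
  thus ?thesis
  proof cases
    case 1
    have "nb1 W x = {V1 n, V1 (n+1)}" by (rule set_eqI) (use 1 in \<open>auto simp: nb1_mem0\<close>)
    thus ?thesis using 1 by (auto simp: At_def P_def)
  next
    case 2
    have "nb1 W x = {V1 1}" by (rule set_eqI) (use 2 in \<open>auto simp: nb1_memP\<close>)
    thus ?thesis using 2 assms by (auto simp: At_def P_def)
  next
    case 3
    have "nb1 W x = {V1 1}" by (rule set_eqI) (use 3 in \<open>auto simp: nb1_memM\<close>)
    thus ?thesis using 3 assms by (auto simp: At_def P_def)
  qed
qed

lemma A_out: "x \<notin> C1 W \<Longrightarrow> A W f x = 0"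
  by (auto simp: A_def P_def C1_def DD_def)
lemma At_out: "x \<notin> C0 W \<Longrightarrow> At W f x = 0"
  by (auto simp: At_def P_def C0_def)

lemma supp_A: assumes "finite (supp f)" shows "finite (supp (A W f))"
proof -
  have "supp (A W f) \<subseteq> (\<Union>e\<in>supp f. nb1 W e)"
  proof
    fix c assume "c \<in> supp (A W f)"
    hence c: "A W f c \<noteq> 0" by (simp add: supp_def)
    hence c1: "c \<in> C1 W" using A_out by blast
    hence "(\<Sum>e\<in>nb0 W c. f e) \<noteq> 0" using c sumA by simp
    then obtain e where "e \<in> nb0 W c" "f e \<noteq> 0" by (meson sum.neutral)
    thus "c \<in> (\<Union>e\<in>supp f. nb1 W e)" using c1 by (auto simp: supp_def nb0_def nb1_def)
  qed
  thus ?thesis using assms fin_nb1 finite_subset by blast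
qed

lemma supp_At: assumes "finite (supp f)" shows "finite (supp (At W f))"
proof -
  have "supp (At W f) \<subseteq> (\<Union>e\<in>supp f. nb0 W e)"
  proof
    fix c assume "c \<in> supp (At W f)"
    hence c: "At W f c \<noteq> 0" by (simp add: supp_def)
    hence c1: "c \<in> C0 W" using At_out by blast
    hence "(\<Sum>e\<in>nb1 W c. f e) \<noteq> 0" using c sumAt by simp
    then obtain e where "e \<in> nb1 W c" "f e \<noteq> 0" by (meson sum.neutral)
    thus "c \<in> (\<Union>e\<in>supp f. nb0 W e)" using c1 by (auto simp: supp_def nb0_def nb1_def)
  qed
  thus ?thesis using assms fin_nb0 finite_subset by blast
qed

lemma vsum_gam: "finite F \<Longrightarrow> vsum F (\<lambda>c y. b c * gam c y) x = (if x \<in> F then b x else 0)"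
  by (simp add: vsum_def gam_def if_distrib cong: if_cong)

lemma Jee: "e \<in> C0 W \<Longrightarrow> c \<in> C1 W \<Longrightarrow> JW W (gam e) (gam c) = (if adj e c then -1 else 0)"
  using C01[of e W] unfolding JW_gam_r supp_gam by (auto simp: gam_def Jb_def)




lemma J0: assumes u: "finite (supp u)" and c: "c \<in> C1 W"
  shows "JW W (restr (C0 W) u) (gam c) = - A W u c"
proof -
  let ?u0 = "restr (C0 W) u"
  have f0: "finite (supp ?u0)" using u by (rule finite_subset[rotated]) (auto simp: supp_def restr_def)
  have "JW W ?u0 (gam c) = (\<Sum>c0\<in>supp ?u0. ?u0 c0 * Jb W c0 c)" by (rule JW_gam_r)
  also have "\<dots> = (\<Sum>c0\<in>nb0 W c. ?u0 c0 * Jb W c0 c)"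
  proof (rule sum_eq_L[OF f0 fin_nb0])
    fix x assume "x \<in> supp ?u0 - nb0 W c"
    thus "?u0 x * Jb W x c = 0" using C01[of x W] c by (auto simp: supp_def restr_def nb0_def Jb_def split: if_splits)
  next
    fix x assume "x \<in> nb0 W c - supp ?u0"
    thus "?u0 x * Jb W x c = 0" by (auto simp: supp_def)
  qed
  also have "\<dots> = (\<Sum>c0\<in>nb0 W c. - u c0)"
    by (rule sum.cong) (use C01 c in \<open>auto simp: nb0_def restr_def Jb_def\<close>)
  also have "\<dots> = - A W u c" using sumA[OF c] by (simp add: sum_negf)
  finally show ?thesis .
qed

lemma J1: assumes u: "finite (supp u)" and x: "x \<in> C0 W"
  shows "JW W (gam x) (restr (C1 W) u) = - At W u x"
proof -
  let ?u1 = "restr (C1 W) u"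
  have f0: "finite (supp ?u1)" using u by (rule finite_subset[rotated]) (auto simp: supp_def restr_def)
  have "JW W (gam x) ?u1 = (\<Sum>c\<in>supp ?u1. ?u1 c * Jb W x c)" by (rule JW_gam_l)
  also have "\<dots> = (\<Sum>c\<in>nb1 W x. ?u1 c * Jb W x c)"
  proof (rule sum_eq_L[OF f0 fin_nb1])
    fix c assume "c \<in> supp ?u1 - nb1 W x"
    thus "?u1 c * Jb W x c = 0" using C01[of x W] x by (auto simp: supp_def restr_def nb1_def Jb_def)
  next
    fix c assume "c \<in> nb1 W x - supp ?u1"
    thus "?u1 c * Jb W x c = 0" by (auto simp: supp_def)
  qed
  also have "\<dots> = (\<Sum>c\<in>nb1 W x. - u c)"
    by (rule sum.cong) (use C01 x in \<open>auto simp: nb1_def restr_def Jb_def\<close>)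
  also have "\<dots> = - At W u x" using sumAt[OF x] by (simp add: sum_negf)
  finally show ?thesis .
qed

lemma Cox1_eq: assumes u: "finite (supp u)"
  shows "Cox1 W d (restr (C1 W) u) x = (-1)^(d-1) * (restr (C1 W) u x + At W u x)"
proof -
  let ?F = "{c \<in> C0 W. JW W (gam c) (restr (C1 W) u) \<noteq> 0}"
  have F: "?F \<subseteq> supp (At W u)" using J1[OF u] by (auto simp: supp_def)
  have fF: "finite ?F" using finite_subset[OF F supp_At[OF u]] .
  have "vsum ?F (\<lambda>c y. JW W (gam c) (restr (C1 W) u) * gam c y) x = - At W u x"
    unfolding vsum_gam[OF fF] using J1[OF u] At_out by (cases "x \<in> C0 W") auto
  thus ?thesis unfolding Cox1_def by simp
qed

lemma Cox0_eq: assumes u: "finite (supp u)"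
  shows "Cox0 W d (restr (C0 W) u) x = (-1)^(d-1) * (restr (C0 W) u x - A W u x - At W (A W u) x)"
proof -
  let ?u0 = "restr (C0 W) u"
  let ?a = "\<lambda>c. JW W ?u0 (gam c)"
  let ?F = "{c \<in> C1 W. ?a c \<noteq> 0}"
  have F: "?F \<subseteq> supp (A W u)" using J0[OF u] by (auto simp: supp_def)
  have fF: "finite ?F" using finite_subset[OF F supp_A[OF u]] .
  have v1: "vsum ?F (\<lambda>c y. ?a c * gam c y) x = - A W u x"
    unfolding vsum_gam[OF fF] using J0[OF u] A_out by (cases "x \<in> C1 W") auto
  have G: "{e \<in> C0 W. JW W (gam e) (gam c) \<noteq> 0} = nb0 W c" if "c \<in> C1 W" for c
    using Jee[OF _ that] by (auto simp: nb0_def split: if_splits)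
  have inner: "vsum {e \<in> C0 W. JW W (gam e) (gam c) \<noteq> 0}
          (\<lambda>e y. ?a c * JW W (gam e) (gam c) * gam e y) x
        = (if x \<in> C0 W \<and> adj x c then A W u c else 0)" if c: "c \<in> ?F" for c
  proof -
    have c1: "c \<in> C1 W" using c by simp
    have "vsum {e \<in> C0 W. JW W (gam e) (gam c) \<noteq> 0}
          (\<lambda>e y. ?a c * JW W (gam e) (gam c) * gam e y) x
        = (if x \<in> nb0 W c then ?a c * JW W (gam x) (gam c) else 0)"
      unfolding G[OF c1] using vsum_gam[OF fin_nb0, where b="\<lambda>e. ?a c * JW W (gam e) (gam c)"] by simp
    also have "\<dots> = (if x \<in> C0 W \<and> adj x c then A W u c else 0)"
      using Jee[OF _ c1] J0[OF u c1] by (auto simp: nb0_def)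
    finally show ?thesis .
  qed
  have v2: "vsum ?F (\<lambda>c. vsum {e \<in> C0 W. JW W (gam e) (gam c) \<noteq> 0}
          (\<lambda>e y. ?a c * JW W (gam e) (gam c) * gam e y)) x = At W (A W u) x"
  proof -
    have "vsum ?F (\<lambda>c. vsum {e \<in> C0 W. JW W (gam e) (gam c) \<noteq> 0}
          (\<lambda>e y. ?a c * JW W (gam e) (gam c) * gam e y)) x
        = (\<Sum>c\<in>?F. (if x \<in> C0 W \<and> adj x c then A W u c else 0))"
      unfolding vsum_def[of ?F] by (rule sum.cong) (use inner in auto)
    also have "\<dots> = At W (A W u) x"
    proof (cases "x \<in> C0 W")
      case True
      have "(\<Sum>c\<in>?F. (if x \<in> C0 W \<and> adj x c then A W u c else 0))
          = (\<Sum>c\<in>nb1 W x. (if x \<in> C0 W \<and> adj x c then A W u c else 0))"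
      proof (rule sum_eq_L[OF fF fin_nb1])
        fix c assume "c \<in> ?F - nb1 W x"
        thus "(if x \<in> C0 W \<and> adj x c then A W u c else 0) = 0" by (auto simp: nb1_def)
      next
        fix c assume "c \<in> nb1 W x - ?F"
        thus "(if x \<in> C0 W \<and> adj x c then A W u c else 0) = 0" using J0[OF u] by (auto simp: nb1_def)
      qed
      also have "\<dots> = (\<Sum>c\<in>nb1 W x. A W u c)" by (rule sum.cong) (auto simp: nb1_def True)
      also have "\<dots> = At W (A W u) x" by (rule sumAt[OF True])
      finally show ?thesis .
    next
      case False
      thus ?thesis using At_out by simp
    qed
    finally show ?thesis .
  qed
  show ?thesis unfolding Cox0_def using v1 v2 by simp
qed

lemma Cox_eq: assumes u: "u \<in> HW W" shows "Cox W d u = TT W d u"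
proof
  fix x
  have fu: "finite (supp u)" and su: "supp u \<subseteq> CW W" using u by (auto simp: HW_def)
  have r: "restr (C0 W) u x + restr (C1 W) u x = u x"
    using su C01[of x W] by (cases "u x = 0") (auto simp: restr_def supp_def CW_def)
  have "Cox W d u x = (-1)^(d-1) * ((restr (C0 W) u x + restr (C1 W) u x) - A W u x - At W (A W u) x + At W u x)"
    unfolding Cox_def Cox0_eq[OF fu] Cox1_eq[OF fu] by (simp add: algebra_simps)
  also have "\<dots> = TT W d u x"
    unfolding r TT_def E1_def E2_def At_add At_sc by (simp add: algebra_simps)
  finally show "Cox W d u x = TT W d u x" .
qed

theorem mainTheorem8:
  fixes W :: wtype and d :: nat
  assumes "d \<ge> 1"
  shows "\<exists>T S. (\<forall>u\<in>HW W. T u = Cox W d u)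
           \<and> bounded_linear_op W T \<and> bounded_linear_op W S
           \<and> (\<forall>f\<in>l2 W. S (T f) = f \<and> T (S f) = f)"
  apply (rule exI[of _ "TT W d"], rule exI[of _ "SS W d"])
  using Cox_eq good_bounded[OF good_TT] good_bounded[OF good_SS] ST TS by metis


end
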